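(* Let $(B,\lfloor\cdot,\cdot\rfloor)$ be an SSD space with quadratic form $q$, let $P\subset B$ be $q$-positive, and suppose $\Phi_P(b)\ge q(b)$ for all $b\in B$. Then $P$ is premaximally $q$-positive and $P^{\pi}=\{b\in B:\Phi_P(b)=q(b)\}$.
   Context: An SSD space is a pair $(B,\lfloor\cdot,\cdot\rfloor)$ with $B$ a nonzero real vector space and $\lfloor\cdot,\cdot\rfloor$ a symmetric bilinear form; $q(b)=\frac12\lfloor b,b\rfloor$. A nonempty $A\subset B$ is $q$-positive if $q(b-c)\ge0$ for all $b,c\in A$; maximally $q$-positive if $q$-positive and not properly contained in another $q$-positive set. $A^{\pi}:=\{b\in B: q(b-a)\ge0\ \forall a\in A\}$. $\Phi_A(x)=\sup_{a\in A}\{\lfloor x,a\rfloor-q(a)\}$ for nonempty $A$. $P$ is premaximally $q$-positive if there is a unique maximally $q$-positive set containing $P$. *)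

theory Defs
  imports "HOL-Analysis.Analysis"
begin

definition ssd_space :: "('b::real_vector \<Rightarrow> 'b \<Rightarrow> real) \<Rightarrow> bool" where
  "ssd_space f \<longleftrightarrow> (\<exists>x::'b. x \<noteq> 0) \<and> (\<forall>x y. f x y = f y x) \<and>
     (\<forall>y. linear (\<lambda>x. f x y))"

definition qf :: "('b \<Rightarrow> 'b \<Rightarrow> real) \<Rightarrow> 'b \<Rightarrow> real" where
  "qf f b = f b b / 2"

definition q_positive :: "('b::real_vector \<Rightarrow> 'b \<Rightarrow> real) \<Rightarrow> 'b set \<Rightarrow> bool" where
  "q_positive f A \<longleftrightarrow> A \<noteq> {} \<and> (\<forall>b\<in>A. \<forall>c\<in>A. qf f (b - c) \<ge> 0)"

definition max_q_positive :: "('b::real_vector \<Rightarrow> 'b \<Rightarrow> real) \<Rightarrow> 'b set \<Rightarrow> bool" where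
  "max_q_positive f A \<longleftrightarrow> q_positive f A \<and> (\<forall>A'. q_positive f A' \<and> A \<subseteq> A' \<longrightarrow> A' = A)"

definition pi_set :: "('b::real_vector \<Rightarrow> 'b \<Rightarrow> real) \<Rightarrow> 'b set \<Rightarrow> 'b set" where
  "pi_set f A = {b. \<forall>a\<in>A. qf f (b - a) \<ge> 0}"

text \<open>\<Phi>_A, valued in the extended reals since the supremum may be infinite.\<close>
definition Phi :: "('b \<Rightarrow> 'b \<Rightarrow> real) \<Rightarrow> 'b set \<Rightarrow> 'b \<Rightarrow> ereal" where
  "Phi f A x = (SUP a\<in>A. ereal (f x a - qf f a))"

definition premax_q_positive :: "('b::real_vector \<Rightarrow> 'b \<Rightarrow> real) \<Rightarrow> 'b set \<Rightarrow> bool" where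
  "premax_q_positive f P \<longleftrightarrow> (\<exists>!M. max_q_positive f M \<and> P \<subseteq> M)"

end

theory Submission
  imports Defs
begin

lemma bil:
  assumes "ssd_space f"
  shows "f (x - y) z = f x z - f y z" "f (x + y) z = f x z + f y z"
    "f (c *\<^sub>R x) z = c * f x z" "f z (x - y) = f z x - f z y"
    "f z (x + y) = f z x + f z y" "f z (c *\<^sub>R x) = c * f z x" "f x y = f y x"
proof -
  have L: "linear (\<lambda>x. f x z)" for z using assms unfolding ssd_space_def by blast
  have S: "\<And>x y. f x y = f y x" using assms unfolding ssd_space_def by blast
  show 1: "f (x - y) z = f x z - f y z" using linear_diff[OF L] by blast
  show 2: "f (x + y) z = f x z + f y z" using linear_add[OF L] by blast
  show 3: "f (c *\<^sub>R x) z = c * f x z" using linear_scale[OF L] by simp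
  show "f z (x - y) = f z x - f z y" using linear_diff[OF L] S by metis
  show "f z (x + y) = f z x + f z y" using linear_add[OF L] S by metis
  show "f z (c *\<^sub>R x) = c * f z x" using linear_scale[OF L] S by (metis real_scaleR_def)
  show "f x y = f y x" by (rule S)
qed

lemma qdiff:
  assumes "ssd_space f"
  shows "qf f (b - a) = qf f b - f b a + qf f a"
proof -
  note B = bil[OF assms]
  have "f (b - a) (b - a) = f b b - f b a - (f a b - f a a)" by (simp add: B(1,4))
  thus ?thesis unfolding qf_def using B(7)[of a b] by simp
qed

lemma Phi_le:
  "Phi f P x \<le> ereal r \<longleftrightarrow> (\<forall>a\<in>P. f x a - qf f a \<le> r)"
  unfolding Phi_def by (simp add: SUP_le_iff)

theorem mainTheorem4:
  fixes f :: "'b::real_vector \<Rightarrow> 'b \<Rightarrow> real" and P :: "'b set"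
  assumes "ssd_space f"
    and "q_positive f P"
    and "\<forall>b. Phi f P b \<ge> ereal (qf f b)"
  shows "premax_q_positive f P \<and> pi_set f P = {b. Phi f P b = ereal (qf f b)}"
proof -
  note B = bil[OF assms(1)]
  have pichar: "b \<in> pi_set f P \<longleftrightarrow> Phi f P b \<le> ereal (qf f b)" for b
  proof -
    have "\<And>a. 0 \<le> qf f (b - a) \<longleftrightarrow> f b a - qf f a \<le> qf f b"
    proof -
      fix a show "0 \<le> qf f (b - a) \<longleftrightarrow> f b a - qf f a \<le> qf f b"
        using qdiff[OF assms(1), of b a] by linarith
    qed
    thus ?thesis unfolding Phi_le pi_set_def by auto
  qed
  have eq: "pi_set f P = {b. Phi f P b = ereal (qf f b)}"
  proof (rule set_eqI)
    fix b
    have "Phi f P b \<ge> ereal (qf f b)" using assms(3) by blast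
    hence "Phi f P b \<le> ereal (qf f b) \<longleftrightarrow> Phi f P b = ereal (qf f b)" by auto
    thus "b \<in> pi_set f P \<longleftrightarrow> b \<in> {b. Phi f P b = ereal (qf f b)}" using pichar by simp
  qed
  have PsubPi: "P \<subseteq> pi_set f P" using assms(2) unfolding q_positive_def pi_set_def by blast
  have Pne: "P \<noteq> {}" using assms(2) unfolding q_positive_def by blast
  have qpos: "q_positive f (pi_set f P)"
    unfolding q_positive_def
  proof (intro conjI ballI)
    show "pi_set f P \<noteq> {}" using PsubPi Pne by blast
    fix b c assume b: "b \<in> pi_set f P" and c: "c \<in> pi_set f P"
    define m where "m = (1/2) *\<^sub>R (b + c)"
    have hb: "\<forall>a\<in>P. f b a - qf f a \<le> qf f b" using b pichar[of b] Phi_le[of f P b "qf f b"] by simp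
    have hc: "\<forall>a\<in>P. f c a - qf f a \<le> qf f c" using c pichar[of c] Phi_le[of f P c "qf f c"] by simp
    have "\<forall>a\<in>P. f m a - qf f a \<le> (qf f b + qf f c) / 2"
    proof
      fix a assume "a \<in> P"
      have "f m a = (f b a + f c a) / 2" unfolding m_def by (simp add: B(2,3))
      thus "f m a - qf f a \<le> (qf f b + qf f c) / 2" using hb[rule_format, OF \<open>a \<in> P\<close>] hc[rule_format, OF \<open>a \<in> P\<close>] by (simp add: field_simps)
    qed
    hence "Phi f P m \<le> ereal ((qf f b + qf f c) / 2)" using Phi_le[of f P m] by simp
    moreover have "Phi f P m \<ge> ereal (qf f m)" using assms(3) by blast
    ultimately have "ereal (qf f m) \<le> ereal ((qf f b + qf f c) / 2)" by (rule order_trans[rotated])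
    hence "qf f m \<le> (qf f b + qf f c) / 2" by simp
    moreover have "qf f m = (qf f b + qf f c) / 4 + f b c / 4"
    proof -
      have "f m m = (f b b + f b c + f c b + f c c) / 4"
        unfolding m_def by (simp add: B(2,3,5,6) algebra_simps)
      thus ?thesis using B(7)[of c b] unfolding qf_def by (simp add: field_simps)
    qed
    moreover have "qf f (b - c) = qf f b - f b c + qf f c" by (rule qdiff[OF assms(1)])
    ultimately show "0 \<le> qf f (b - c)" by argo
  qed
  have sub: "M \<subseteq> pi_set f P" if "q_positive f M" "P \<subseteq> M" for M
    using that unfolding q_positive_def pi_set_def by blast
  have mx: "max_q_positive f (pi_set f P)"
    unfolding max_q_positive_def using qpos sub PsubPi by blast
  have "premax_q_positive f P"
    unfolding premax_q_positive_def
  proof (rule ex1I[of _ "pi_set f P"])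
    show "max_q_positive f (pi_set f P) \<and> P \<subseteq> pi_set f P" using mx PsubPi by blast
    fix M assume "max_q_positive f M \<and> P \<subseteq> M"
    thus "M = pi_set f P" using sub qpos unfolding max_q_positive_def by blast
  qed
  thus ?thesis using eq by blast
qed

end
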